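(* Under the hypotheses of the growth condition (convex, symmetric, sign-invariant $f$, $g(w,x)=f_\sigma(wx^\top-\bar w\bar x^\top)$, and $\kappa>0$ with $g(w,x)-g(\bar w,\bar x)\ge\kappa\|wx^\top-\bar w\bar x^\top\|_F$ for all $(w,x)$), let $(w,x)\in\mathbb{R}^{d_1}\times\mathbb{R}^{d_2}$ and let $Y\in\partial f_\sigma(wx^\top-\bar w\bar x^\top)$ attain $\mathrm{dist}(0,\partial g(w,x))=\|(Yx,Y^\top w)\|$. Then $$\kappa\|wx^\top-\bar w\bar x^\top\|-(\sigma_1(Y)+\sigma_2(Y))\|\bar w\bar x^\top\|\le\min\{\|w\|,\|x\|\}\,\mathrm{dist}(0,\partial g(w,x)).$$
   Context: Let $d=\min\{d_1,d_2\}$ and $\sigma:\mathbb{R}^{d_1\times d_2}\to\mathbb{R}^d_+$ give singular values in nonincreasing order. $f:\mathbb{R}^d\to\mathbb{R}$ is symmetric if $f(\pi s)=f(s)$ for all permutation matrices $\pi$, sign invariant if $f(Ds)=f(s)$ for all diagonal $D$ with entries in $\{\pm1\}$; $f_\sigma=f\circ\sigma$ is convex when $f$ is and $\partial f_\sigma$ is its convex subdifferential; $\partial g(w,x)=\{(Yx,Y^\top w):Y\in\partial f_\sigma(wx^\top-\bar w\bar x^\top)\}$. $\|M\|$ is the operator norm, $\|M\|_F$ the Frobenius norm. *)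

theory Defs
  imports "HOL-Analysis.Analysis" "HOL-Library.Multiset"
begin

text \<open>Matrices in R^{d1 x d2} are rendered as real^'d2^'d1; the library norm on this
type is the Frobenius norm and the library inner product is the Frobenius inner product.
Vectors in R^d (d = min d1 d2) are rendered as real lists of length d.\<close>

definition outer :: "real^'m \<Rightarrow> real^'n \<Rightarrow> real^'n^'m" where
  "outer w x = (\<chi> i j. w $ i * x $ j)"

definition op_norm :: "real^'n^'m \<Rightarrow> real" where
  "op_norm M = onorm (\<lambda>v. M *v v)"

text \<open>Eigenvalues (with multiplicity = dimension of eigenspace) of a square matrix;
used only for the symmetric matrix M^T M.\<close>
definition eig_mset :: "real^'n^'n \<Rightarrow> real multiset" where
  "eig_mset A = (\<Sum>t \<in> {t. \<exists>v. v \<noteq> 0 \<and> A *v v = t *s v}.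
                    replicate_mset (dim {v. A *v v = t *s v}) t)"

definition sing_vals :: "real^'n^'m \<Rightarrow> real list" where
  "sing_vals M = take (min CARD('m) CARD('n))
      (map sqrt (rev (sorted_list_of_multiset (eig_mset (transpose M ** M)))))"

text \<open>k-th singular value (0-based), with the convention 0 for k >= d.\<close>
definition sv :: "real^'n^'m \<Rightarrow> nat \<Rightarrow> real" where
  "sv M k = (if k < length (sing_vals M) then sing_vals M ! k else 0)"

definition convex_Rd :: "nat \<Rightarrow> (real list \<Rightarrow> real) \<Rightarrow> bool" where
  "convex_Rd d f \<longleftrightarrow> (\<forall>s t u. length s = d \<and> length t = d \<and> 0 \<le> u \<and> u \<le> 1 \<longrightarrow>
      f (map2 (\<lambda>a b. u * a + (1 - u) * b) s t) \<le> u * f s + (1 - u) * f t)"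

definition symmetric_Rd :: "nat \<Rightarrow> (real list \<Rightarrow> real) \<Rightarrow> bool" where
  "symmetric_Rd d f \<longleftrightarrow> (\<forall>s p. length s = d \<and> p permutes {..<d} \<longrightarrow>
      f (map (\<lambda>i. s ! p i) [0..<d]) = f s)"

definition sign_invariant_Rd :: "nat \<Rightarrow> (real list \<Rightarrow> real) \<Rightarrow> bool" where
  "sign_invariant_Rd d f \<longleftrightarrow> (\<forall>s e. length s = d \<and> length e = d \<and> set e \<subseteq> {-1, 1} \<longrightarrow>
      f (map2 (*) e s) = f s)"

definition f_sigma :: "(real list \<Rightarrow> real) \<Rightarrow> real^'n^'m \<Rightarrow> real" where
  "f_sigma f M = f (sing_vals M)"

definition subdiff :: "('a::real_inner \<Rightarrow> real) \<Rightarrow> 'a \<Rightarrow> 'a set" where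
  "subdiff h M = {Y. \<forall>Z. h Z \<ge> h M + inner Y (Z - M)}"

definition gfun :: "(real list \<Rightarrow> real) \<Rightarrow> real^'m \<Rightarrow> real^'n \<Rightarrow> real^'m \<Rightarrow> real^'n \<Rightarrow> real" where
  "gfun f wb xb w x = f_sigma f (outer w x - outer wb xb)"

definition subdiff_g :: "(real list \<Rightarrow> real) \<Rightarrow> real^'m \<Rightarrow> real^'n \<Rightarrow> real^'m \<Rightarrow> real^'n
     \<Rightarrow> ((real^'m) \<times> (real^'n)) set" where
  "subdiff_g f wb xb w x =
     {(Y *v x, transpose Y *v w) | Y. Y \<in> subdiff (f_sigma f) (outer w x - outer wb xb)}"

end

theory Submission
  imports Defs
begin

lemma frob_bound:
  fixes A :: "real^'n^'m"
  shows "norm (A *v v) \<le> norm A * norm v"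
proof -
  have "norm (A *v v)^2 = (\<Sum>i\<in>UNIV. ((A *v v)$i)^2)"
    by (simp add: norm_vec_def L2_set_def sum_nonneg)
  also have "\<dots> = (\<Sum>i\<in>UNIV. (inner (A$i) v)^2)"
    by (simp only: matrix_vector_mul_component)
  also have "\<dots> \<le> (\<Sum>i\<in>UNIV. norm (A$i)^2 * norm v^2)"
  proof (rule sum_mono)
    fix i
    have "\<bar>inner (A$i) v\<bar> \<le> norm (A$i) * norm v" by (rule Cauchy_Schwarz_ineq2)
    then have "\<bar>inner (A$i) v\<bar>^2 \<le> (norm (A$i) * norm v)^2"
      by (rule power_mono) simp
    then show "(inner (A$i) v)^2 \<le> norm (A$i)^2 * norm v^2" by (simp add: power_mult_distrib power2_abs)
  qed
  also have "\<dots> = norm A ^2 * norm v^2"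
    by (simp add: power2_norm_eq_inner[of A] inner_vec_def sum_distrib_right power2_norm_eq_inner)
  finally have "norm (A *v v)^2 \<le> (norm A * norm v)^2" by (simp add: power_mult_distrib)
  then show ?thesis by (rule power2_le_imp_le) simp
qed

lemma inner_outer:
  fixes Y :: "real^'n^'m"
  shows "inner Y (outer a b) = inner a (Y *v b)"
  by (simp add: inner_vec_def outer_def matrix_vector_mult_def sum_distrib_left mult_ac)

lemma op_norm_le: "op_norm (M :: real^'n^'m) \<le> norm M"
  unfolding op_norm_def by (rule onorm_le) (rule frob_bound)

lemma op_norm_nonneg: "op_norm (M :: real^'n^'m) \<ge> 0"
  unfolding op_norm_def by (rule onorm_pos_le) simp

lemma op_norm_outer: "norm a * norm b \<le> op_norm (outer a b :: real^'n^'m)"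
proof (cases "b = 0")
  case True then show ?thesis using op_norm_nonneg by simp
next
  case False
  have eq: "outer a b *v b = (inner b b) *s a"
    by (simp add: outer_def matrix_vector_mult_def inner_vec_def vec_eq_iff sum_distrib_left mult_ac)
  have "norm (outer a b *v b) \<le> op_norm (outer a b) * norm b"
    unfolding op_norm_def by (rule onorm) simp
  moreover have "norm (outer a b *v b) = norm a * norm b * norm b"
    unfolding eq by (simp add: scalar_mult_eq_scaleR power2_norm_eq_inner[symmetric] power2_eq_square mult_ac)
  ultimately show ?thesis using False by simp
qed

lemma AtA_inner:
  fixes Y :: "real^'n^'m"
  shows "inner ((transpose Y ** Y) *v u) v = inner (Y *v u) (Y *v v)"
proof -
  have "(transpose Y ** Y) *v u = (Y *v u) v* Y"
    by (simp add: matrix_vector_mul_assoc[symmetric])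
  then show ?thesis by (simp add: dot_lmul_matrix)
qed

lemma eig_finite:
  fixes Y :: "real^'n^'m"
  defines "A \<equiv> transpose Y ** Y"
  shows "finite {t. \<exists>v. v \<noteq> 0 \<and> A *v v = t *s v}"
proof -
  define E where "E = {t. \<exists>v. v \<noteq> 0 \<and> A *v v = t *s v}"
  define ev where "ev t = (SOME v. v \<noteq> (0::real^'n) \<and> A *v v = t *s v)" for t
  have ev: "ev t \<noteq> 0 \<and> A *v ev t = t *s ev t" if "t \<in> E" for t
  proof -
    from that obtain v where "v \<noteq> 0 \<and> A *v v = t *s v" unfolding E_def by blast
    then show ?thesis unfolding ev_def by (rule someI)
  qed
  have inj: "inj_on ev E"
  proof (rule inj_onI)
    fix s t assume st: "s \<in> E" "t \<in> E" "ev s = ev t"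
    then have "s *s ev s = t *s ev s" using ev[OF st(1)] ev[OF st(2)] by metis
    then show "s = t" using ev[OF st(1)]
      by (metis scalar_mult_eq_scaleR scaleR_cancel_right)
  qed
  have orth: "pairwise orthogonal (ev ` E)"
  proof (clarsimp simp: pairwise_def)
    fix s t assume st: "s \<in> E" "t \<in> E" "ev s \<noteq> ev t"
    then have "s \<noteq> t" by auto
    have "s * inner (ev s) (ev t) = inner (A *v ev s) (ev t)"
      using ev[OF st(1)] by (simp only: scalar_mult_eq_scaleR inner_scaleR_left)
    also have "\<dots> = inner (Y *v ev s) (Y *v ev t)" unfolding A_def by (rule AtA_inner)
    also have "\<dots> = inner (A *v ev t) (ev s)" unfolding A_def AtA_inner by (rule inner_commute)
    also have "\<dots> = t * inner (ev s) (ev t)"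
      using ev[OF st(2)] by (simp only: scalar_mult_eq_scaleR inner_scaleR_left inner_commute[of "ev t" "ev s"])
    finally have "(s - t) * inner (ev s) (ev t) = 0" by (simp add: left_diff_distrib)
    then show "orthogonal (ev s) (ev t)" using \<open>s \<noteq> t\<close> by (simp add: orthogonal_def)
  qed
  have "0 \<notin> ev ` E" using ev by fastforce
  then have "independent (ev ` E)" using orth pairwise_orthogonal_independent by blast
  then have "finite (ev ` E)" using independent_bound by blast
  then have "finite E" using inj finite_imageD by blast
  then show ?thesis unfolding E_def .
qed

lemma eig_set:
  fixes Y :: "real^'n^'m"
  defines "A \<equiv> transpose Y ** Y"
  shows "set_mset (eig_mset A) = {t. \<exists>v. v \<noteq> 0 \<and> A *v v = t *s v}"
proof -
  have fin: "finite {t. \<exists>v. v \<noteq> 0 \<and> A *v v = t *s v}" unfolding A_def by (rule eig_finite)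
  have "dim {v. A *v v = t *s v} \<noteq> 0" if "v \<noteq> 0" "A *v v = t *s v" for t v
    using that by (auto simp: dim_eq_0)
  then show ?thesis unfolding eig_mset_def set_mset_sum[OF fin]
    by (auto simp del: dim_eq_0)
qed

lemma eig_nonneg:
  fixes Y :: "real^'n^'m"
  assumes "t \<in># eig_mset (transpose Y ** Y)"
  shows "t \<ge> 0"
proof -
  obtain v where v: "v \<noteq> 0" "(transpose Y ** Y) *v v = t *s v"
    using assms unfolding eig_set by blast
  have "t * inner v v = inner ((transpose Y ** Y) *v v) v"
    using v by (simp add: scalar_mult_eq_scaleR)
  also have "\<dots> = inner (Y *v v) (Y *v v)" by (rule AtA_inner)
  finally have "t * inner v v \<ge> 0" by simp
  moreover have "inner v v > 0" using v by simp
  ultimately show ?thesis by (simp add: zero_le_mult_iff)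
qed

lemma quad_zero:
  fixes a b :: real
  assumes "a \<ge> 0" "b \<ge> 0" "\<And>t. 2 * t * a + t^2 * b \<ge> 0"
  shows "a = 0"
proof -
  define t where "t = - a / (b + 1)"
  have h: "t * (b + 1) = - a" unfolding t_def using assms(2) by simp
  have "(b+1)^2 * (2*t*a + t^2*b) = 2*(t*(b+1))*a*(b+1) + (t*(b+1))^2*b"
    by (simp add: algebra_simps power2_eq_square)
  also have "\<dots> = - (a^2 * (b + 2))" unfolding h by (simp add: algebra_simps power2_eq_square)
  finally have e: "(b+1)^2 * (2*t*a + t^2*b) = - (a^2 * (b + 2))" .
  have "(b+1)^2 * (2*t*a + t^2*b) \<ge> 0" using assms(3)[of t] by simp
  then have "a^2 * (b + 2) \<le> 0" using e by simp
  then have "a^2 \<le> 0" using assms(2) by (simp add: mult_le_0_iff)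
  then show ?thesis using assms(1) by simp
qed

lemma top_eig:
  fixes Y :: "real^'n^'m"
  obtains lam where "lam \<in># eig_mset (transpose Y ** Y)" "\<And>z. norm (Y *v z)^2 \<le> lam * norm z^2"
proof -
  define S where "S = sphere (0::real^'n) 1"
  have S: "compact S" "S \<noteq> {}" unfolding S_def by auto
  have "continuous_on S ((*v) Y)" by (rule linear_continuous_on) simp
  then have "continuous_on S (\<lambda>z. norm (Y *v z)^2)"
    by (intro continuous_on_power continuous_on_norm)
  then obtain v where v: "v \<in> S" "\<And>y. y \<in> S \<Longrightarrow> norm (Y *v y)^2 \<le> norm (Y *v v)^2"
    using continuous_attains_sup[OF S] by blast
  define lam where "lam = norm (Y *v v)^2"
  have nv: "norm v = 1" using v(1) unfolding S_def by simp
  have bound: "norm (Y *v z)^2 \<le> lam * norm z^2" for z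
  proof (cases "z = 0")
    case True then show ?thesis by simp
  next
    case False
    define u where "u = (1 / norm z) *\<^sub>R z"
    have "u \<in> S" unfolding S_def u_def using False by simp
    then have "norm (Y *v u)^2 \<le> lam" using v(2) unfolding lam_def by blast
    moreover have "norm (Y *v u)^2 = norm (Y *v z)^2 / norm z^2"
      unfolding u_def matrix_vector_mult_scaleR by (simp add: power_divide)
    ultimately show ?thesis using False by (simp add: divide_le_eq)
  qed
  define q where "q z = lam * inner z z - inner (Y *v z) (Y *v z)" for z
  have qnn: "q z \<ge> 0" for z using bound[of z] unfolding q_def by (simp add: power2_norm_eq_inner)
  define A where "A = transpose Y ** Y"
  define u where "u = lam *\<^sub>R v - A *v v"
  have q0: "q v = 0" unfolding q_def lam_def using nv by (simp add: power2_norm_eq_inner[symmetric])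
  have Au: "inner (Y *v v) (Y *v u) = inner (A *v v) u" unfolding A_def by (simp add: AtA_inner)
  have uu: "inner u u = lam * inner v u - inner (A *v v) u"
    unfolding u_def by (simp add: inner_diff_left)
  have exp: "q (v + t *\<^sub>R u) = 2 * t * inner u u + t^2 * q u" for t
  proof -
    have "q (v + t *\<^sub>R u) = q v + 2 * t * (lam * inner v u - inner (Y *v v) (Y *v u)) + t^2 * q u"
      unfolding q_def
      by (simp add: matrix_vector_right_distrib matrix_vector_mult_scaleR inner_add_left
          inner_add_right inner_commute algebra_simps power2_eq_square)
    then show ?thesis using q0 Au uu by simp
  qed
  have "inner u u = 0"
  proof (rule quad_zero[of _ "q u"])
    show "0 \<le> inner u u" by simp
    show "0 \<le> q u" by (rule qnn)
    fix t show "0 \<le> 2 * t * inner u u + t^2 * q u" using qnn[of "v + t *\<^sub>R u"] exp[of t] by simp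
  qed
  then have "A *v v = lam *s v" unfolding u_def by (simp add: scalar_mult_eq_scaleR)
  moreover have "v \<noteq> 0" using nv by auto
  ultimately have "lam \<in># eig_mset (transpose Y ** Y)" unfolding eig_set A_def by blast
  then show ?thesis using that bound by blast
qed

lemma sorted_le_last: "sorted xs \<Longrightarrow> x \<in> set xs \<Longrightarrow> (x::real) \<le> last xs"
proof (induction xs)
  case Nil then show ?case by simp
next
  case (Cons a xs) then show ?case
    by (cases xs) (auto)
qed

lemma sv_bounds:
  fixes Y :: "real^'n^'m"
  assumes "lam \<in># eig_mset (transpose Y ** Y)"
  shows "sqrt lam \<le> sv Y 0" "0 \<le> sv Y 1"
proof -
  define xs where "xs = sorted_list_of_multiset (eig_mset (transpose Y ** Y))"
  have set_xs: "set xs = set_mset (eig_mset (transpose Y ** Y))" unfolding xs_def by simp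
  have sxs: "sorted xs" unfolding xs_def by simp
  have lx: "lam \<in> set xs" using assms set_xs by simp
  then have ne: "xs \<noteq> []" by auto
  have d: "min CARD('m) CARD('n) \<ge> 1" by simp
  have sv_eq: "sing_vals Y = take (min CARD('m) CARD('n)) (map sqrt (rev xs))"
    unfolding sing_vals_def xs_def ..
  have len: "length (sing_vals Y) \<ge> 1" unfolding sv_eq using d ne by (simp add: Suc_le_eq)
  have "sing_vals Y ! 0 = sqrt (last xs)" unfolding sv_eq using d ne
    by (simp add: hd_rev[symmetric] hd_conv_nth)
  then have "sv Y 0 = sqrt (last xs)" unfolding sv_def using len by (simp add: Suc_le_eq)
  then show "sqrt lam \<le> sv Y 0" using sorted_le_last[OF sxs lx] by simp
  show "0 \<le> sv Y 1"
  proof (cases "1 < length (sing_vals Y)")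
    case True
    then have l1: "1 < length xs" "1 < min CARD('m) CARD('n)" unfolding sv_eq by auto
    then have "sing_vals Y ! 1 = sqrt (rev xs ! 1)" unfolding sv_eq by simp
    moreover have "rev xs ! 1 \<in> set xs" using l1 by (metis length_rev nth_mem set_rev)
    then have "rev xs ! 1 \<ge> 0" using set_xs eig_nonneg by auto
    ultimately show ?thesis unfolding sv_def using True by simp
  next
    case False then show ?thesis unfolding sv_def by simp
  qed
qed

theorem lemmaC2:
  fixes f :: "real list \<Rightarrow> real"
    and wb w :: "real^'d1" and xb x :: "real^'d2"
    and \<kappa> :: real and Y :: "real^'d2^'d1"
  assumes "convex_Rd (min CARD('d1) CARD('d2)) f"
    and "symmetric_Rd (min CARD('d1) CARD('d2)) f"
    and "sign_invariant_Rd (min CARD('d1) CARD('d2)) f"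
    and "\<kappa> > 0"
    and "\<forall>w' x'. gfun f wb xb w' x' - gfun f wb xb wb xb \<ge> \<kappa> * norm (outer w' x' - outer wb xb)"
    and "Y \<in> subdiff (f_sigma f) (outer w x - outer wb xb)"
    and "norm (Y *v x, transpose Y *v w) = infdist 0 (subdiff_g f wb xb w x)"
  shows "\<kappa> * op_norm (outer w x - outer wb xb) - (sv Y 0 + sv Y 1) * op_norm (outer wb xb)
           \<le> min (norm w) (norm x) * infdist 0 (subdiff_g f wb xb w x)"
proof -
  define M where "M = outer w x - outer wb xb"
  define D where "D = infdist 0 (subdiff_g f wb xb w x)"
  have D: "D = norm (Y *v x, transpose Y *v w)" using assms(7) unfolding D_def by simp
  have "f_sigma f (0::real^'d2^'d1) \<ge> f_sigma f M + inner Y (0 - M)"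
    using assms(6) unfolding subdiff_def M_def mem_Collect_eq by (rule spec)
  then have s1: "inner Y M \<ge> f_sigma f M - f_sigma f (0::real^'d2^'d1)" by simp
  have "gfun f wb xb w x - gfun f wb xb wb xb \<ge> \<kappa> * norm M"
    using assms(5) unfolding M_def by blast
  then have s2: "f_sigma f M - f_sigma f (0::real^'d2^'d1) \<ge> \<kappa> * norm M" unfolding gfun_def M_def by simp
  have s3: "\<kappa> * op_norm M \<le> \<kappa> * norm M" using assms(4) op_norm_le[of M] by simp
  have ip: "inner Y M = inner w (Y *v x) - inner wb (Y *v xb)"
    unfolding M_def by (simp add: inner_diff_right inner_outer)
  have t1: "inner w (Y *v x) \<le> norm w * D"
  proof -
    have "inner w (Y *v x) \<le> norm w * norm (Y *v x)" by (rule norm_cauchy_schwarz)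
    also have "\<dots> \<le> norm w * D" unfolding D by (rule mult_left_mono) (simp_all add: norm_fst_le)
    finally show ?thesis .
  qed
  have t2: "inner w (Y *v x) \<le> norm x * D"
  proof -
    have "inner w (Y *v x) = inner (transpose Y *v w) x"
      by (metis dot_lmul_matrix transpose_transpose vector_transpose_matrix)
    also have "\<dots> \<le> norm (transpose Y *v w) * norm x" by (rule norm_cauchy_schwarz)
    also have "\<dots> \<le> D * norm x" unfolding D by (rule mult_right_mono) (simp_all add: norm_snd_le)
    finally show ?thesis by (simp add: mult.commute)
  qed
  have t12: "inner w (Y *v x) \<le> min (norm w) (norm x) * D"
    using t1 t2 by (simp add: min_def)
  obtain lam where lam: "lam \<in># eig_mset (transpose Y ** Y)" "\<And>z. norm (Y *v z)^2 \<le> lam * norm z^2"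
    using top_eig by blast
  have lam0: "lam \<ge> 0" using eig_nonneg[OF lam(1)] .
  have sv: "sqrt lam \<le> sv Y 0" "0 \<le> sv Y 1" using sv_bounds[OF lam(1)] by auto
  have nY: "norm (Y *v xb) \<le> sqrt lam * norm xb"
  proof -
    have "sqrt (norm (Y *v xb)^2) \<le> sqrt (lam * norm xb^2)"
      using lam(2) real_sqrt_le_mono by blast
    then show ?thesis by (simp add: real_sqrt_mult)
  qed
  have on0: "op_norm (outer wb xb) \<ge> 0" by (rule op_norm_nonneg)
  have t3: "- inner wb (Y *v xb) \<le> (sv Y 0 + sv Y 1) * op_norm (outer wb xb)"
  proof -
    have "- inner wb (Y *v xb) \<le> norm wb * norm (Y *v xb)"
      using norm_cauchy_schwarz[of "-wb" "Y *v xb"] by simp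
    also have "\<dots> \<le> norm wb * (sqrt lam * norm xb)" by (rule mult_left_mono[OF nY]) simp
    also have "\<dots> = sqrt lam * (norm wb * norm xb)" by simp
    also have "\<dots> \<le> sv Y 0 * (norm wb * norm xb)" by (rule mult_right_mono[OF sv(1)]) simp
    also have "\<dots> \<le> sv Y 0 * op_norm (outer wb xb)"
      by (rule mult_left_mono[OF op_norm_outer]) (use sv(1) lam0 in \<open>meson order_trans real_sqrt_ge_zero\<close>)
    also have "\<dots> \<le> (sv Y 0 + sv Y 1) * op_norm (outer wb xb)"
      using sv(2) on0 by (simp add: distrib_right)
    finally show ?thesis .
  qed
  show ?thesis
    using s1 s2 s3 ip t12 t3 unfolding M_def[symmetric] D_def[symmetric] by linarith
qed

end
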